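(* For every integer $i \ge 0$ and every integer $\nu \ge 0$, the following two identities hold: \[ \sum_{k=0}^{2\nu} (-1)^{k}\, \binom{2\nu+i}{k+i}\, 2^{-k}\, \binom{2k}{k} =\pi\,(2\nu+1)_{i}\,\frac{2^{2i}\, i!}{(2i)!}\,\sum_{r=0}^{i}\frac{2^{-r}\,\binom{i}{r}\, \left(\tfrac12+\tfrac12(i-r)\right)_{\nu}}{(i-r)!\,\Gamma^{2}\!\left(\tfrac12+\tfrac12(r-i)\right)\,\left(1+\tfrac12(i-r)\right)_{\nu}} \] and \[ \sum_{k=0}^{2\nu+1} (-1)^{k}\, \binom{2\nu+1+i}{k+i}\, 2^{-k}\, \binom{2k}{k} =2\pi\,(2\nu+2)_{i}\,\frac{2^{2i}\, i!}{(2i)!}\,\sum_{r=0}^{i}\frac{2^{-r}\,\binom{i}{r}\, \left(1+\tfrac12(i-r)\right)_{\nu}}{(i-r+1)!\,\Gamma^{2}\!\left(\tfrac12(r-i)\right)\,\left(\tfrac32+\tfrac12(i-r)\right)_{\nu}}. \]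
   Context: For a complex number $a$ and integer $n\ge 0$, $(a)_n$ denotes the Pochhammer symbol: $(a)_0=1$ and $(a)_n=a(a+1)\cdots(a+n-1)$ for $n\ge1$. $\Gamma$ is Euler's gamma function; whenever $\Gamma$ is evaluated at a non-positive integer in a denominator, the corresponding term is interpreted as $0$ (i.e. $1/\Gamma(-m)=0$ for integers $m\ge 0$). *)

theory Defs
  imports "HOL-Analysis.Analysis"
begin

end

theory Submission
  imports Defs
begin


declare binomial_Suc_Suc [simp del]

fun dd :: "nat \<Rightarrow> real" where
  "dd 0 = 1" | "dd (Suc 0) = 0" | "dd (Suc (Suc m)) = dd m * (real m + 1) / (real m + 2)"

definition aa :: "nat \<Rightarrow> real" where "aa k = real ((2*k) choose k) / 2^k"

definition ff :: "nat \<Rightarrow> nat \<Rightarrow> real" where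
  "ff n i = (\<Sum>k=0..n. (-1)^k * real ((n+i) choose (k+i)) / 2^k * real ((2*k) choose k))"

lemma aa_Suc: "real (Suc k) * aa (Suc k) = (2 * real k + 1) * aa k"
proof -
  have h1: "Suc k * (Suc (Suc (2*k)) choose Suc k) = Suc (Suc (2*k)) * (Suc (2*k) choose k)"
    by (rule Suc_times_binomial)
  have h2: "(Suc (2*k) - k) * (Suc (2*k) choose k) = Suc (2*k) * ((Suc (2*k) - 1) choose k)"
    by (rule binomial_absorb_comp)
  have e: "Suc (2*k) - k = Suc k" "Suc (2*k) - 1 = 2*k" by simp_all
  have r1: "real (Suc k) * real (Suc (Suc (2*k)) choose Suc k) = (2*real k + 2) * real (Suc (2*k) choose k)"
    using arg_cong[OF h1, of real] by (simp add: algebra_simps)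
  have r2: "real (Suc k) * real (Suc (2*k) choose k) = (2*real k + 1) * real ((2*k) choose k)"
    using arg_cong[OF h2, of real] unfolding e by (simp add: algebra_simps)
  have e2: "2 * Suc k = Suc (Suc (2*k))" by simp
  have "real (Suc k) * real (Suc (Suc (2*k)) choose Suc k) = 2 * ((2*real k + 1) * real ((2*k) choose k))"
    using r1 r2 by (simp add: algebra_simps)
  thus ?thesis unfolding aa_def e2 by (simp add: field_simps)
qed

lemma ff_alt: "ff n i = (\<Sum>k<n+2. (-1)^k * aa k * real ((n+i) choose (k+i)))"
proof -
  have "ff n i = (\<Sum>k<Suc n. (-1)^k * aa k * real ((n+i) choose (k+i)))"
    unfolding ff_def aa_def atLeast0AtMost lessThan_Suc_atMost[symmetric]
    by (rule sum.cong) auto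
  also have "\<dots> = (\<Sum>k<n+2. (-1)^k * aa k * real ((n+i) choose (k+i)))"
    by simp
  finally show ?thesis .
qed

lemma binom_real: "real (Suc j) * real (N choose Suc j) = (real N - real j) * real (N choose j)"
proof (cases "j < N")
  case True
  have "Suc j * (N choose Suc j) = N * ((N-1) choose j)"
    using times_binomial_minus1_eq[of "Suc j" N] by simp
  moreover have "(N - j) * (N choose j) = N * ((N-1) choose j)"
    by (rule binomial_absorb_comp)
  ultimately have "Suc j * (N choose Suc j) = (N - j) * (N choose j)" by simp
  hence "real (Suc j * (N choose Suc j)) = real ((N - j) * (N choose j))" by simp
  thus ?thesis using True by (simp add: of_nat_diff algebra_simps)
next
  case False
  hence "N choose Suc j = 0" by simp
  moreover have "real N - real j = 0 \<or> (N choose j) = 0" using False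
    by (cases "j = N") auto
  ultimately show ?thesis by (metis mult_zero_left mult_zero_right of_nat_0)
qed

lemma ff_three: "(2 * real i + 1) * ff n (Suc i) = (real n + real i + 1) * ff n i + (real n + 1) * ff (Suc n) i"
proof -
  define N where "N = n + i + 1"
  define t where "t k = (-1)^k * aa k * real (N choose (k+i+1))" for k
  define u where "u k = (-1)^k * aa k * real (N choose (k+i))" for k
  define g where "g k = real k * u k" for k
  have e1: "ff n (Suc i) = (\<Sum>k<n+2. t k)"
    unfolding ff_alt t_def N_def by simp
  have e2: "(real n + real i + 1) * ff n i = (\<Sum>k<n+2. (real k + real i + 1) * t k)"
  proof -
    have "(real n + real i + 1) * ff n i = (\<Sum>k<n+2. (-1)^k * aa k * ((real n + real i + 1) * real ((n+i) choose (k+i))))"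
      unfolding ff_alt sum_distrib_left by (rule sum.cong) auto
    also have "\<dots> = (\<Sum>k<n+2. (real k + real i + 1) * t k)"
    proof (rule sum.cong)
      fix k assume "k \<in> {..<n+2}"
      have "Suc (n+i) * ((n+i) choose (k+i)) = Suc (k+i) * (Suc (n+i) choose Suc (k+i))"
        using Suc_times_binomial_eq by simp
      hence "(real n + real i + 1) * real ((n+i) choose (k+i)) = (real k + real i + 1) * real (N choose (k+i+1))"
        unfolding N_def by (metis (no_types, lifting) Suc_eq_plus1 add.commute add.left_commute of_nat_Suc of_nat_add of_nat_mult)
      thus "(-1)^k * aa k * ((real n + real i + 1) * real ((n+i) choose (k+i))) = (real k + real i + 1) * t k"
        unfolding t_def by simp
    qed simp
    finally show ?thesis .
  qed
  have e3: "(real n + 1) * ff (Suc n) i = (\<Sum>k<n+2. (real n + 1) * u k)"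
  proof -
    have "ff (Suc n) i = (\<Sum>k<Suc (n+2). u k)" unfolding ff_alt[of "Suc n" i] u_def N_def
      by (simp add: add.commute add.left_commute)
    also have "\<dots> = (\<Sum>k<n+2. u k)" by (simp add: u_def N_def binomial_eq_0)
    finally show ?thesis by (simp only: sum_distrib_left)
  qed
  have tel: "(real i - real k) * t k - (real n + 1) * u k = g (Suc k) - g k" for k
  proof -
    define s where "s = (-1::real)^k * aa k"
    define X where "X = real (N choose Suc (k+i))"
    define Y where "Y = real (N choose (k+i))"
    have g1: "g (Suc k) = - ((-1)^k * (real (Suc k) * aa (Suc k)) * X)"
      unfolding g_def u_def X_def by (simp add: algebra_simps)
    also have "\<dots> = - ((-1)^k * ((2 * real k + 1) * aa k) * X)"
      by (simp only: aa_Suc)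
    finally have g1: "g (Suc k) = - ((2 * real k + 1) * (s * X))" unfolding s_def by (simp add: algebra_simps)
    have rel0: "real (Suc (k+i)) * X = (real N - real (k+i)) * Y"
      unfolding X_def Y_def by (rule binom_real)
    have rel: "(real k + real i + 1) * X = (real n + 1 - real k) * Y"
      using rel0 unfolding N_def by (simp add: algebra_simps)
    have tk: "t k = s * X" unfolding t_def s_def X_def by (simp add: algebra_simps)
    have uk: "u k = s * Y" unfolding u_def s_def Y_def by simp
    have gk: "g k = real k * (s * Y)" unfolding g_def uk ..
    have "(real i - real k) * (s*X) - (real n + 1) * (s*Y) - (- ((2 * real k + 1) * (s * X)) - real k * (s * Y))
          = s * ((real k + real i + 1) * X - (real n + 1 - real k) * Y)"
      by (simp add: algebra_simps)
    also have "\<dots> = 0" using rel by simp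
    finally show ?thesis unfolding tk uk gk g1 by simp
  qed
  have "(\<Sum>k<n+2. (real i - real k) * t k - (real n + 1) * u k) = g (n+2) - g 0"
    unfolding tel by (rule sum_lessThan_telescope)
  also have "\<dots> = 0"
  proof -
    have "N choose (n+2+i) = 0" unfolding N_def by (rule binomial_eq_0) simp
    thus ?thesis unfolding g_def u_def by simp
  qed
  finally have z: "(\<Sum>k<n+2. (real i - real k) * t k - (real n + 1) * u k) = 0" .
  have "(2 * real i + 1) * ff n (Suc i) - (real n + real i + 1) * ff n i - (real n + 1) * ff (Suc n) i
      = (\<Sum>k<n+2. (real i - real k) * t k - (real n + 1) * u k)"
    unfolding e1 e2 e3 sum_distrib_left sum_subtractf[symmetric]
    by (rule sum.cong) (auto simp: algebra_simps)
  with z show ?thesis by linarith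
qed


lemma ff_pascal: "ff (Suc n) (Suc i) = ff (Suc n) i + ff n (Suc i)"
proof -
  have e: "Suc n + 2 = Suc (n+2)" by simp
  have c: "ff n (Suc i) = (\<Sum>k<Suc n+2. (-1)^k * aa k * real ((n + Suc i) choose (k + Suc i)))"
  proof -
    have h: "(n + Suc i) choose (n + 2 + Suc i) = 0" by (rule binomial_eq_0) simp
    show ?thesis unfolding e sum.lessThan_Suc ff_alt[of n "Suc i"] by (simp only: h of_nat_0 mult_zero_right add_0_right)
  qed
  have t: "(-1)^k * aa k * real ((Suc n + Suc i) choose (k + Suc i))
     = (-1)^k * aa k * real ((Suc n + i) choose (k + i)) + (-1)^k * aa k * real ((n + Suc i) choose (k + Suc i))" for k
  proof -
    have "((Suc n + Suc i) choose (k + Suc i)) = ((Suc n + i) choose (k + i)) + ((n + Suc i) choose (k + Suc i))"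
      using binomial_Suc_Suc[of "Suc n + i" "k+i"] by simp
    thus ?thesis by (simp only: of_nat_add distrib_left)
  qed
  have "ff (Suc n) (Suc i) = (\<Sum>k<Suc n+2. (-1)^k * aa k * real ((Suc n + i) choose (k + i)) + (-1)^k * aa k * real ((n + Suc i) choose (k + Suc i)))"
    unfolding ff_alt[of "Suc n" "Suc i"] by (rule sum.cong[OF refl t])
  also have "\<dots> = ff (Suc n) i + ff n (Suc i)"
    unfolding sum.distrib ff_alt[of "Suc n" i] c ..
  finally show ?thesis .
qed

lemma ff_rec0: "(real m + 2) * ff (Suc (Suc m)) 0 = (real m + 1) * ff m 0"
proof -
  have t1: "ff m 1 = (real m + 1) * ff m 0 + (real m + 1) * ff (Suc m) 0"
    using ff_three[of 0 m] by simp
  have t2: "ff (Suc m) 1 = (real m + 2) * ff (Suc m) 0 + (real m + 2) * ff (Suc (Suc m)) 0"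
    using ff_three[of 0 "Suc m"] by (simp add: algebra_simps)
  have p: "ff (Suc m) 1 = ff (Suc m) 0 + ff m 1"
    using ff_pascal[of m 0] by simp
  from t1 t2 p show ?thesis by (simp add: algebra_simps)
qed

lemma ff_base: "ff n 0 = dd n"
proof (induction n rule: dd.induct)
  case 1
  then show ?case by (simp add: ff_def)
next
  case 2
  then show ?case by (simp add: ff_def)
next
  case (3 m)
  have "(real m + 2) * ff (Suc (Suc m)) 0 = (real m + 1) * dd m"
    using ff_rec0[of m] 3 by simp
  then show ?case by (simp add: field_simps)
qed

definition GG :: "nat \<Rightarrow> nat \<Rightarrow> real" where
  "GG n i = (\<Sum>m\<le>i. real (i choose m) * dd (n+m))"

definition ww :: "nat \<Rightarrow> nat \<Rightarrow> real" where
  "ww n i = fact (n+i) * 2^i * fact i / (fact n * fact (2*i))"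

lemma GG_pascal: "GG n (Suc i) = GG n i + GG (Suc n) i"
proof -
  have t: "real (Suc i choose Suc m) * dd (n + Suc m) = real (i choose m) * dd (Suc n + m) + real (i choose Suc m) * dd (n + Suc m)" for m
  proof -
    have "n + Suc m = Suc n + m" by simp
    thus ?thesis by (simp only: binomial_Suc_Suc of_nat_add distrib_right)
  qed
  have "GG n (Suc i) = dd n + (\<Sum>m\<le>i. real (Suc i choose Suc m) * dd (n + Suc m))"
    unfolding GG_def by (simp only: sum.atMost_Suc_shift) simp
  also have "\<dots> = dd n + (\<Sum>m\<le>i. real (i choose Suc m) * dd (n + Suc m)) + GG (Suc n) i"
    unfolding t sum.distrib GG_def by simp
  also have "dd n + (\<Sum>m\<le>i. real (i choose Suc m) * dd (n + Suc m)) = GG n i"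
  proof -
    have "GG n i = (\<Sum>m\<le>Suc i. real (i choose m) * dd (n+m))"
      unfolding GG_def by simp
    also have "\<dots> = dd n + (\<Sum>m\<le>i. real (i choose Suc m) * dd (n + Suc m))"
      by (simp only: sum.atMost_Suc_shift) simp
    finally show ?thesis by simp
  qed
  finally show ?thesis .
qed

lemma ww1: "(2 * real i + 1) * ww n (Suc i) = (real n + real i + 1) * ww n i"
proof -
  have f1: "(fact (n + Suc i) :: real) = (real n + real i + 1) * fact (n+i)"
    by (simp add: algebra_simps)
  have f2: "(fact (Suc i) :: real) = (real i + 1) * fact i" by (simp add: algebra_simps)
  have f3: "(fact (2 * Suc i) :: real) = (2 * real i + 2) * ((2 * real i + 1) * fact (2*i))"
  proof -
    have "2 * Suc i = Suc (Suc (2*i))" by simp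
    thus ?thesis by (simp only: fact_Suc) (simp add: algebra_simps)
  qed
  have Y: "fact n * fact (2*Suc i) \<noteq> (0::real)" "fact n * fact (2*i) \<noteq> (0::real)" by simp_all
  show ?thesis unfolding ww_def times_divide_eq_right frac_eq_eq[OF Y]
    by (simp only: f1 f2 f3 power_Suc) algebra
qed

lemma ww2: "(real n + 1) * ww (Suc n) i = (real n + real i + 1) * ww n i"
proof -
  have f1: "(fact (Suc n + i) :: real) = (real n + real i + 1) * fact (n+i)"
    by (simp add: algebra_simps)
  have f2: "(fact (Suc n) :: real) = (real n + 1) * fact n" by (simp add: algebra_simps)
  have Y: "fact (Suc n) * fact (2*i) \<noteq> (0::real)" "fact n * fact (2*i) \<noteq> (0::real)" by simp_all
  show ?thesis unfolding ww_def times_divide_eq_right frac_eq_eq[OF Y]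
    by (simp only: f1 f2) algebra
qed


lemma ff_main: "ff n i = ww n i * GG n i"
proof (induction i arbitrary: n)
  case 0
  then show ?case by (simp add: ff_base ww_def GG_def)
next
  case (Suc i)
  have "(2 * real i + 1) * ff n (Suc i) = (real n + real i + 1) * ff n i + (real n + 1) * ff (Suc n) i"
    by (rule ff_three)
  also have "\<dots> = (real n + real i + 1) * ww n i * GG n i + ((real n + 1) * ww (Suc n) i) * GG (Suc n) i"
    using Suc by simp
  also have "\<dots> = (real n + real i + 1) * ww n i * GG n (Suc i)"
    unfolding ww2 GG_pascal by (simp add: algebra_simps)
  also have "\<dots> = (2 * real i + 1) * (ww n (Suc i) * GG n (Suc i))"
    using ww1[of i n] by simp
  finally show ?case by simp
qed



lemma rGamma_half: "(rGamma (1/2 :: real))^2 = 1 / pi"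
proof -
  have "rGamma (1/2::real) = inverse (sqrt pi)" by (simp only: rGamma_inverse_Gamma Gamma_one_half_real)
  hence "(rGamma (1/2::real))^2 = inverse ((sqrt pi)^2)" by (simp only: power_inverse)
  also have "(sqrt pi)^2 = pi" by simp
  finally show ?thesis by (simp only: inverse_eq_divide)
qed

lemma cancel2: "(f::real) \<noteq> 0 \<Longrightarrow> a > 0 \<Longrightarrow> p * (4 * t) * (a^2 * S / 4) / ((a+1) * (a * f)) = (p * t * S / f) * (a / (a + 1))"
proof -
  assume h: "f \<noteq> 0" "a > 0"
  hence n: "(a+1) * (a * f) \<noteq> 0" "f * (a+1) \<noteq> 0" by simp_all
  have m: "p * (4 * t) * (a^2 * S / 4) = p*t*S*a*a" by (simp add: power2_eq_square)
  have "p * (4 * t) * (a^2 * S / 4) / ((a+1) * (a * f)) = (p*t*S*a*a) / ((a+1) * (a * f))"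
    by (simp only: m)
  also have "\<dots> = (p*t*S*a) / (f * (a+1))"
    unfolding frac_eq_eq[OF n] by (simp add: algebra_simps)
  also have "\<dots> = (p * t * S / f) * (a / (a + 1))" by simp
  finally show ?thesis .
qed

lemma base_dd: "pi * 2^m * (rGamma ((1 - real m)/2))^2 / fact m = dd m"
proof (induction m rule: dd.induct)
  case 1
  have h: "(1 - real (0::nat))/2 = (1/2::real)" by simp
  show ?case unfolding h rGamma_half by simp
next
  case 2
  have h: "(1 - real (Suc 0))/2 = (0::real)" by simp
  show ?case unfolding h rGamma_0 by simp
next
  case (3 m)
  define x where "x = (1 - real (Suc (Suc m)))/2"
  define R where "R = rGamma ((1 - real m)/2)"
  have x1: "x + 1 = (1 - real m)/2" unfolding x_def by (simp add: field_simps)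
  have rg: "rGamma x = x * R"
    using rGamma_plus1[of x] unfolding x1 R_def[symmetric] by (rule sym)
  have xx: "x = - (real m + 1)/2" unfolding x_def by (simp add: field_simps)
  have fm: "fact (Suc (Suc m)) = (real m + 2) * ((real m + 1) * (fact m :: real))"
    by (simp add: algebra_simps)
  have x2: "(rGamma x)^2 = ((real m + 1)/2)^2 * R^2"
  proof -
    have "(rGamma x)^2 = x^2 * R^2" unfolding rg by (rule power_mult_distrib)
    also have "x^2 = ((real m + 1)/2)^2" unfolding xx by (simp add: power2_eq_square algebra_simps)
    finally show ?thesis .
  qed
  have IH: "pi * 2^m * R^2 / fact m = dd m" unfolding R_def by (rule 3)
  have "pi * 2^Suc (Suc m) * (rGamma x)^2 / fact (Suc (Suc m))
      = (pi * 2^m * R^2 / fact m) * ((real m + 1) / (real m + 2))"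
  proof -
    have e4: "(2::real)^Suc (Suc m) = 4 * 2^m" by simp
    have x2': "(rGamma x)^2 = (real m + 1)^2 * R^2 / 4" unfolding x2 by (simp add: power_divide)
    have e5: "real m + 2 = (real m + 1) + 1" by simp
    show ?thesis unfolding x2' fm e4 e5 by (rule cancel2) simp_all
  qed
  also have "\<dots> = dd m * ((real m + 1) / (real m + 2))" unfolding IH ..
  also have "\<dots> = dd (Suc (Suc m))" by simp
  finally show ?case unfolding x_def .
qed

lemma core1: "pochhammer (1/2 + real m/2) \<nu> * (rGamma (1/2 - real m/2))^2 / (fact m * pochhammer (1 + real m/2) \<nu>)
   = dd (2*\<nu> + m) / (pi * 2^m)"
proof -
  define R where "R = (rGamma (1/2 - real m/2))^2"
  have h0: "pi * 2^m * R / fact m = dd m"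
  proof -
    have "(1 - real m)/2 = 1/2 - real m/2" by (simp add: field_simps)
    then show ?thesis using base_dd[of m] unfolding R_def by (simp only:)
  qed
  have "pochhammer (1/2 + real m/2) \<nu> * R / (fact m * pochhammer (1 + real m/2) \<nu>)
   = dd (2*\<nu> + m) / (pi * 2^m)"
  proof (induction \<nu>)
    case 0
    have "pi > 0" "(fact m::real) > 0" by simp_all
    then show ?case using h0 by (simp add: field_simps)
  next
    case (Suc \<nu>)
    define A where "A = pochhammer (1/2 + real m/2) \<nu>"
    define B where "B = pochhammer (1 + real m/2) \<nu>"
    have Bp: "B > 0" unfolding B_def by (rule pochhammer_pos) simp
    have q: "(1 + real m/2 + real \<nu>) > 0" by simp
    have fp: "(fact m :: real) > 0" by simp
    have e: "2 * Suc \<nu> + m = Suc (Suc (2*\<nu> + m))" by simp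
    have IH: "A * R / (fact m * B) = dd (2*\<nu> + m) / (pi * 2^m)" using Suc unfolding A_def B_def .
    have "pochhammer (1/2 + real m/2) (Suc \<nu>) * R / (fact m * pochhammer (1 + real m/2) (Suc \<nu>))
        = (A * R / (fact m * B)) * ((1/2 + real m/2 + real \<nu>) / (1 + real m/2 + real \<nu>))"
      unfolding pochhammer_Suc A_def[symmetric] B_def[symmetric] using Bp q fp by (simp add: field_simps)
    also have "\<dots> = dd (2*\<nu> + m) / (pi * 2^m) * ((real (2*\<nu>+m) + 1) / (real (2*\<nu>+m) + 2))"
    proof -
      have "(1/2 + real m/2 + real \<nu>) / (1 + real m/2 + real \<nu>) = (real (2*\<nu>+m) + 1) / (real (2*\<nu>+m) + 2)"
        using q by (simp add: field_simps)
      then show ?thesis unfolding IH by simp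
    qed
    also have "\<dots> = dd (2 * Suc \<nu> + m) / (pi * 2^m)" unfolding e by simp
    finally show ?case .
  qed
  then show ?thesis unfolding R_def .
qed

lemma poch_fact: "pochhammer (real (n+1)) i = fact (n+i) / fact n"
proof (induction i)
  case 0 then show ?case by simp
next
  case (Suc i)
  then show ?case by (simp add: pochhammer_Suc algebra_simps)
qed



lemma rev_sum: "(\<Sum>r=0..i. real (i choose r) * dd (n + (i-r))) = GG n i"
proof -
  have "(\<Sum>r=0..i. real (i choose r) * dd (n + (i-r))) = (\<Sum>r=0..i. real (i choose (i + 0 - r)) * dd (n + (i-(i + 0 - r))))"
    by (rule sum.atLeastAtMost_rev)
  also have "\<dots> = (\<Sum>r=0..i. real (i choose r) * dd (n + r))"
    by (rule sum.cong) (auto simp: binomial_symmetric[symmetric])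
  finally show ?thesis unfolding GG_def atLeast0AtMost .
qed

lemma term1:
  assumes "r \<le> i"
  shows "(1/2)^r * real (i choose r) * pochhammer (1/2 + (real i - real r)/2) \<nu>
           / (fact (i-r) * pochhammer (1 + (real i - real r)/2) \<nu>)
           * (rGamma (1/2 + (real r - real i)/2))^2
        = real (i choose r) * dd (2*\<nu> + (i-r)) / (pi * 2^i)"
proof -
  define m where "m = i - r"
  have im: "i = r + m" unfolding m_def using assms by simp
  have e1: "real i - real r = real m" unfolding m_def using assms by (simp add: of_nat_diff)
  have e2: "1/2 + (real r - real i)/2 = 1/2 - real m/2" unfolding im by (simp add: field_simps)
  define P where "P = pochhammer (1/2 + real m/2) \<nu>"
  define Q where "Q = pochhammer (1 + real m/2) \<nu>"
  define R where "R = (rGamma (1/2 - real m/2))^2"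
  define C where "C = real (i choose r)"
  define D where "D = dd (2*\<nu> + m)"
  have core: "P * R / (fact m * Q) = D / (pi * 2^m)"
    unfolding P_def Q_def R_def D_def by (rule core1)
  have "(1/2)^r * C * P / (fact m * Q) * R = (1/2)^r * C * (P * R / (fact m * Q))" by simp
  also have "\<dots> = (1/2)^r * C * (D / (pi * 2^m))" unfolding core ..
  also have "\<dots> = C * D / (pi * 2^i)" unfolding im power_add
    by (simp add: field_simps power_one_over)
  finally have "(1/2)^r * C * P / (fact m * Q) * R = C * D / (pi * 2^i)" .
  then show ?thesis unfolding e1 e2 m_def[symmetric] P_def Q_def R_def C_def D_def .
qed

lemma term2:
  assumes "r \<le> i"
  shows "(1/2)^r * real (i choose r) * pochhammer (1 + (real i - real r)/2) \<nu>
                 / (fact (i-r+1) * pochhammer (3/2 + (real i - real r)/2) \<nu>)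
                 * (rGamma ((real r - real i)/2))^2
        = real (i choose r) * dd (2*\<nu>+1 + (i-r)) / (pi * 2^i * 2)"
proof -
  define m where "m = i - r"
  have im: "i = r + m" unfolding m_def using assms by simp
  have e1: "real i - real r = real m" unfolding m_def using assms by (simp add: of_nat_diff)
  have e2: "(real r - real i)/2 = 1/2 - real (Suc m)/2" unfolding im by (simp add: field_simps)
  have e3: "1 + real m/2 = 1/2 + real (Suc m)/2" by (simp add: field_simps)
  have e4: "3/2 + real m/2 = 1 + real (Suc m)/2" by (simp add: field_simps)
  have e5: "i - r + 1 = Suc m" unfolding m_def by simp
  define P where "P = pochhammer (1/2 + real (Suc m)/2) \<nu>"
  define Q where "Q = pochhammer (1 + real (Suc m)/2) \<nu>"
  define R where "R = (rGamma (1/2 - real (Suc m)/2))^2"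
  define C where "C = real (i choose r)"
  define D where "D = dd (2*\<nu> + Suc m)"
  have core: "P * R / (fact (Suc m) * Q) = D / (pi * 2^Suc m)"
    unfolding P_def Q_def R_def D_def by (rule core1)
  have "(1/2)^r * C * P / (fact (Suc m) * Q) * R = (1/2)^r * C * (P * R / (fact (Suc m) * Q))" by simp
  also have "\<dots> = (1/2)^r * C * (D / (pi * 2^Suc m))" unfolding core ..
  also have "\<dots> = C * D / (pi * 2^i * 2)" unfolding im power_add
    by (simp add: field_simps power_one_over)
  finally have "(1/2)^r * C * P / (fact (Suc m) * Q) * R = C * D / (pi * 2^i * 2)" .
  moreover have "2*\<nu>+1 + (i-r) = 2*\<nu> + Suc m" unfolding m_def by simp
  ultimately show ?thesis unfolding e1 e2 e3 e4 e5 m_def[symmetric] P_def Q_def R_def C_def D_def by simp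
qed

lemma fin2: "(pi::real) \<noteq> 0 \<Longrightarrow> Fn \<noteq> 0 \<Longrightarrow> f2 \<noteq> 0 \<Longrightarrow> t \<noteq> 0 \<Longrightarrow>
   2 * pi * (F/Fn) * (t*t) * fi / f2 * (G/(pi*t*2)) = F * t * fi / (Fn * f2) * G"
  by (simp add: field_simps)

theorem theorem2p1:
  fixes i \<nu> :: nat
  shows "(\<Sum>k=0..2*\<nu>. (-1)^k * real ((2*\<nu>+i) choose (k+i)) / 2^k * real ((2*k) choose k))
           = pi * pochhammer (real (2*\<nu>+1)) i * 2^(2*i) * fact i / fact (2*i) *
             (\<Sum>r=0..i. (1/2)^r * real (i choose r) * pochhammer (1/2 + (real i - real r)/2) \<nu>
                 / (fact (i-r) * pochhammer (1 + (real i - real r)/2) \<nu>)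
                 * (rGamma (1/2 + (real r - real i)/2))^2)
       \<and> (\<Sum>k=0..2*\<nu>+1. (-1)^k * real ((2*\<nu>+1+i) choose (k+i)) / 2^k * real ((2*k) choose k))
           = 2 * pi * pochhammer (real (2*\<nu>+2)) i * 2^(2*i) * fact i / fact (2*i) *
             (\<Sum>r=0..i. (1/2)^r * real (i choose r) * pochhammer (1 + (real i - real r)/2) \<nu>
                 / (fact (i-r+1) * pochhammer (3/2 + (real i - real r)/2) \<nu>)
                 * (rGamma ((real r - real i)/2))^2)"
proof
  have pp: "pi > 0" "(fact i :: real) > 0" "(fact (2*i) :: real) > 0" "(fact (2*\<nu>) :: real) > 0"
    "(fact (2*\<nu>+1) :: real) > 0" by simp_all
  have p4: "(2::real)^(2*i) = 2^i * 2^i" by (simp only: mult_2 power_add)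
  have S1: "(\<Sum>r=0..i. (1/2)^r * real (i choose r) * pochhammer (1/2 + (real i - real r)/2) \<nu>
                 / (fact (i-r) * pochhammer (1 + (real i - real r)/2) \<nu>)
                 * (rGamma (1/2 + (real r - real i)/2))^2) = GG (2*\<nu>) i / (pi * 2^i)"
  proof -
    have "(\<Sum>r=0..i. (1/2)^r * real (i choose r) * pochhammer (1/2 + (real i - real r)/2) \<nu>
                 / (fact (i-r) * pochhammer (1 + (real i - real r)/2) \<nu>)
                 * (rGamma (1/2 + (real r - real i)/2))^2)
        = (\<Sum>r=0..i. real (i choose r) * dd (2*\<nu> + (i-r)) / (pi * 2^i))"
      by (rule sum.cong[OF refl], rule term1, simp)
    also have "\<dots> = (\<Sum>r=0..i. real (i choose r) * dd (2*\<nu> + (i-r))) / (pi * 2^i)"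
      by (rule sum_divide_distrib[symmetric])
    finally show ?thesis unfolding rev_sum .
  qed
  have L1: "(\<Sum>k=0..2*\<nu>. (-1)^k * real ((2*\<nu>+i) choose (k+i)) / 2^k * real ((2*k) choose k)) = ff (2*\<nu>) i"
    unfolding ff_def ..
  have P1: "pochhammer (real (2*\<nu>+1)) i = fact (2*\<nu>+i) / fact (2*\<nu>)" by (rule poch_fact)
  show "(\<Sum>k=0..2*\<nu>. (-1)^k * real ((2*\<nu>+i) choose (k+i)) / 2^k * real ((2*k) choose k))
           = pi * pochhammer (real (2*\<nu>+1)) i * 2^(2*i) * fact i / fact (2*i) *
             (\<Sum>r=0..i. (1/2)^r * real (i choose r) * pochhammer (1/2 + (real i - real r)/2) \<nu>
                 / (fact (i-r) * pochhammer (1 + (real i - real r)/2) \<nu>)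
                 * (rGamma (1/2 + (real r - real i)/2))^2)"
    unfolding S1 L1 ff_main P1 ww_def p4 using pp by (simp add: field_simps)
next
  have pp: "pi > 0" "(fact i :: real) > 0" "(fact (2*i) :: real) > 0" "(fact (2*\<nu>) :: real) > 0"
    "(fact (2*\<nu>+1) :: real) > 0" by simp_all
  have p4: "(2::real)^(2*i) = 2^i * 2^i" by (simp only: mult_2 power_add)
  have S2: "(\<Sum>r=0..i. (1/2)^r * real (i choose r) * pochhammer (1 + (real i - real r)/2) \<nu>
                 / (fact (i-r+1) * pochhammer (3/2 + (real i - real r)/2) \<nu>)
                 * (rGamma ((real r - real i)/2))^2) = GG (2*\<nu>+1) i / (pi * 2^i * 2)"
  proof -
    have "(\<Sum>r=0..i. (1/2)^r * real (i choose r) * pochhammer (1 + (real i - real r)/2) \<nu>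
                 / (fact (i-r+1) * pochhammer (3/2 + (real i - real r)/2) \<nu>)
                 * (rGamma ((real r - real i)/2))^2)
        = (\<Sum>r=0..i. real (i choose r) * dd (2*\<nu>+1 + (i-r)) / (pi * 2^i * 2))"
      by (rule sum.cong[OF refl], rule term2, simp)
    also have "\<dots> = (\<Sum>r=0..i. real (i choose r) * dd (2*\<nu>+1 + (i-r))) / (pi * 2^i * 2)"
      by (rule sum_divide_distrib[symmetric])
    finally show ?thesis unfolding rev_sum .
  qed
  have L2: "(\<Sum>k=0..2*\<nu>+1. (-1)^k * real ((2*\<nu>+1+i) choose (k+i)) / 2^k * real ((2*k) choose k)) = ff (2*\<nu>+1) i"
    unfolding ff_def ..
  have e: "real (2*\<nu>+2) = real ((2*\<nu>+1)+1)" by simp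
  have P2: "pochhammer (real (2*\<nu>+2)) i = fact (2*\<nu>+1+i) / fact (2*\<nu>+1)" unfolding e by (rule poch_fact)
  show "(\<Sum>k=0..2*\<nu>+1. (-1)^k * real ((2*\<nu>+1+i) choose (k+i)) / 2^k * real ((2*k) choose k))
           = 2 * pi * pochhammer (real (2*\<nu>+2)) i * 2^(2*i) * fact i / fact (2*i) *
             (\<Sum>r=0..i. (1/2)^r * real (i choose r) * pochhammer (1 + (real i - real r)/2) \<nu>
                 / (fact (i-r+1) * pochhammer (3/2 + (real i - real r)/2) \<nu>)
                 * (rGamma ((real r - real i)/2))^2)"
    unfolding S2 L2 ff_main P2 ww_def p4 by (rule fin2[symmetric]) simp_all
qed

end
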